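(* Let $H$ be a canonical 2-edge-cover of a graph $G=(V,E)$ such that $H$ has $b|H|$ bridges and exactly $t|H|$ edges of $H$ belong to 2EC components of $H$ which are triangles. Assign credits as follows: each 2EC component $C$ of $H$ gets $2$ credits if it has at least 7 edges, $1$ credit if it is a triangle, and $\frac{3}{10}k$ credits if it is a $k$-cycle with $4\le k\le 6$; each connected component of $H$ that is not 2EC gets $1$ credit; each bridge of $H$ gets $\frac14$ credit; each block of $H$ gets $1$ credit. Let $cr(H)$ be the total credits and $cost(H)=|H|+cr(H)$. Then $cost(H)\le\left(\frac{13}{10}+\frac1{30}t-\frac1{20}b\right)|H|$.
   Context: A 2-edge-cover of $G=(V,E)$ is $H\subseteq E$ with every node incident to at least two edges of $H$. A graph is 2EC if connected and it stays connected after removal of any one edge; 2EC components of $H$ are components of $(V,H)$ that are 2EC. In a non-2EC component $C$ of $H$, a bridge is an edge whose removal disconnects $C$; a block is a maximal 2EC subgraph of $C$ with at least 2 nodes; a leaf block is a block incident to exactly one bridge of $C$, an inner block otherwise. $H$ is canonical if: (i) every 2EC component of $H$ is an $i$-cycle ($3\le i\le6$) or has at least 7 edges; (ii) leaf blocks have at least 6 edges and inner blocks at least 4 edges; (iii) no 2-edge-cover of the same size with fewer connected components can be obtained from $H$ by adding up to 3 edges and removing the same number of edges. *)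

theory Defs
  imports Main Complex_Main
begin

definition simple_graph :: "'a set \<Rightarrow> 'a set set \<Rightarrow> bool" where
  "simple_graph V E \<longleftrightarrow> finite V \<and> (\<forall>e\<in>E. e \<subseteq> V \<and> card e = 2)"

definition adj :: "'a set set \<Rightarrow> ('a \<times> 'a) set" where
  "adj F = (\<Union>e\<in>F. {(x, y). x \<in> e \<and> y \<in> e})"

definition connected_graph :: "'a set \<Rightarrow> 'a set set \<Rightarrow> bool" where
  "connected_graph S F \<longleftrightarrow> S \<noteq> {} \<and> (\<forall>e\<in>F. e \<subseteq> S) \<and>
     (\<forall>u\<in>S. \<forall>v\<in>S. (u, v) \<in> (adj F)\<^sup>*)"

definition two_ec :: "'a set \<Rightarrow> 'a set set \<Rightarrow> bool" where
  "two_ec S F \<longleftrightarrow> connected_graph S F \<and> (\<forall>e\<in>F. connected_graph S (F - {e}))"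

definition two_edge_cover :: "'a set \<Rightarrow> 'a set set \<Rightarrow> 'a set set \<Rightarrow> bool" where
  "two_edge_cover V E H \<longleftrightarrow> H \<subseteq> E \<and> (\<forall>v\<in>V. 2 \<le> card {e\<in>H. v \<in> e})"

definition comps :: "'a set \<Rightarrow> 'a set set \<Rightarrow> 'a set set" where
  "comps V H = {C. \<exists>v\<in>V. C = {u\<in>V. (v, u) \<in> (adj H)\<^sup>*}}"

definition comp_edges :: "'a set set \<Rightarrow> 'a set \<Rightarrow> 'a set set" where
  "comp_edges H C = {e\<in>H. e \<subseteq> C}"

definition is_2ec_comp :: "'a set \<Rightarrow> 'a set set \<Rightarrow> 'a set \<Rightarrow> bool" where
  "is_2ec_comp V H C \<longleftrightarrow> C \<in> comps V H \<and> two_ec C (comp_edges H C)"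

definition is_cycle :: "'a set \<Rightarrow> 'a set set \<Rightarrow> nat \<Rightarrow> bool" where
  "is_cycle S F k \<longleftrightarrow> card S = k \<and> card F = k \<and> connected_graph S F \<and>
     (\<forall>v\<in>S. card {e\<in>F. v \<in> e} = 2)"

definition bridges :: "'a set \<Rightarrow> 'a set set \<Rightarrow> 'a set set" where
  "bridges V H = {e\<in>H. \<exists>C\<in>comps V H. \<not> two_ec C (comp_edges H C) \<and> e \<subseteq> C \<and>
      \<not> connected_graph C (comp_edges H C - {e})}"

definition blocks :: "'a set \<Rightarrow> 'a set set \<Rightarrow> ('a set \<times> 'a set set) set" where
  "blocks V H = {(S, F). \<exists>C\<in>comps V H. \<not> two_ec C (comp_edges H C) \<and>
      S \<subseteq> C \<and> F \<subseteq> comp_edges H C \<and> two_ec S F \<and> 2 \<le> card S \<and>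
      (\<forall>S' F'. S \<subseteq> S' \<and> F \<subseteq> F' \<and> S' \<subseteq> C \<and> F' \<subseteq> comp_edges H C \<and> two_ec S' F'
          \<longrightarrow> S' = S \<and> F' = F)}"

definition leaf_block :: "'a set \<Rightarrow> 'a set set \<Rightarrow> 'a set \<Rightarrow> bool" where
  "leaf_block V H S \<longleftrightarrow> card {e\<in>bridges V H. e \<inter> S \<noteq> {}} = 1"

definition canonical :: "'a set \<Rightarrow> 'a set set \<Rightarrow> 'a set set \<Rightarrow> bool" where
  "canonical V E H \<longleftrightarrow> two_edge_cover V E H \<and>
     (\<forall>C\<in>comps V H. two_ec C (comp_edges H C) \<longrightarrow>
        (\<exists>i\<in>{3..6}. is_cycle C (comp_edges H C) i) \<or> 7 \<le> card (comp_edges H C)) \<and>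
     (\<forall>(S, F)\<in>blocks V H. (leaf_block V H S \<longrightarrow> 6 \<le> card F) \<and>
                            (\<not> leaf_block V H S \<longrightarrow> 4 \<le> card F)) \<and>
     \<not> (\<exists>A R. A \<subseteq> E - H \<and> R \<subseteq> H \<and> card A = card R \<and> card A \<le> 3 \<and>
            two_edge_cover V E ((H - R) \<union> A) \<and>
            card (comps V ((H - R) \<union> A)) < card (comps V H))"

definition comp_credit :: "'a set set \<Rightarrow> 'a set \<Rightarrow> real" where
  "comp_credit H C =
     (if two_ec C (comp_edges H C) then
        (if 7 \<le> card (comp_edges H C) then 2
         else if is_cycle C (comp_edges H C) 3 then 1
         else if (\<exists>k\<in>{4..6}. is_cycle C (comp_edges H C) k)
              then 3 / 10 * real (card (comp_edges H C))
         else 0)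
      else 1)"

definition credits :: "'a set \<Rightarrow> 'a set set \<Rightarrow> real" where
  "credits V H = (\<Sum>C\<in>comps V H. comp_credit H C) + 1/4 * real (card (bridges V H))
                 + real (card (blocks V H))"

definition cost :: "'a set \<Rightarrow> 'a set set \<Rightarrow> real" where
  "cost V H = real (card H) + credits V H"

definition triangle_edges :: "'a set \<Rightarrow> 'a set set \<Rightarrow> 'a set set" where
  "triangle_edges V H = \<Union>{comp_edges H C | C. C \<in> comps V H \<and>
      two_ec C (comp_edges H C) \<and> is_cycle C (comp_edges H C) 3}"

end

theory Submission
  imports Defs "HOL-Library.Product_Order"
begin


lemma adj_iff: "(x,y) \<in> adj G \<longleftrightarrow> (\<exists>g\<in>G. x\<in>g \<and> y\<in>g)"
  unfolding adj_def by auto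

lemma adj_sym: "sym (adj G)"
  unfolding adj_def sym_def by auto

lemma rt_sym: "(x,y) \<in> (adj G)\<^sup>* \<Longrightarrow> (y,x) \<in> (adj G)\<^sup>*"
  by (meson adj_sym sym_rtrancl symD)

lemma adj_mono: "G \<subseteq> G' \<Longrightarrow> adj G \<subseteq> adj G'"
  unfolding adj_def by auto

lemma rt_mono: "G \<subseteq> G' \<Longrightarrow> (x,y) \<in> (adj G)\<^sup>* \<Longrightarrow> (x,y) \<in> (adj G')\<^sup>*"
  by (meson adj_mono rtrancl_mono subsetD)

lemma rt_replace:
  assumes xy: "(x,y) \<in> (adj (G - {g}))\<^sup>*" and g: "g \<subseteq> {x,y}" and ab: "(a,b) \<in> (adj G)\<^sup>*"
  shows "(a,b) \<in> (adj (G - {g}))\<^sup>*"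
  using ab
proof (induction rule: rtrancl_induct)
  case base then show ?case by simp
next
  case (step z z')
  from step(2) obtain h where h: "h \<in> G" "z \<in> h" "z' \<in> h" by (auto simp: adj_iff)
  show ?case
  proof (cases "h = g")
    case False
    then have "(z,z') \<in> adj (G - {g})" using h by (auto simp: adj_iff)
    then show ?thesis using step(3) by simp
  next
    case True
    then have "z \<in> {x,y}" "z' \<in> {x,y}" using h g by auto
    then have "(z,z') \<in> (adj (G - {g}))\<^sup>*" using xy rt_sym by auto
    then show ?thesis using step(3) by simp
  qed
qed

lemma rt_restrict:
  assumes "(a,z) \<in> (adj G)\<^sup>*"
  shows "(a,z) \<in> (adj {h\<in>G. h \<subseteq> {w. (a,w) \<in> (adj G)\<^sup>*}})\<^sup>*"
  using assms
proof (induction rule: rtrancl_induct)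
  case base then show ?case by simp
next
  case (step z z')
  from step(2) obtain h where h: "h \<in> G" "z \<in> h" "z' \<in> h" by (auto simp: adj_iff)
  have "h \<subseteq> {w. (a,w) \<in> (adj G)\<^sup>*}"
  proof
    fix w assume "w \<in> h"
    then have "(z,w) \<in> adj G" using h by (auto simp: adj_iff)
    then show "w \<in> {w. (a,w) \<in> (adj G)\<^sup>*}" using step(1) by simp
  qed
  then have "(z,z') \<in> adj {h\<in>G. h \<subseteq> {w. (a,w) \<in> (adj G)\<^sup>*}}" using h by (auto simp: adj_iff)
  then show ?case using step(3) by simp
qed

lemma rt_stay:
  assumes "(u,w) \<in> (adj G)\<^sup>*" "u \<in> C" "\<forall>h\<in>G. h \<subseteq> C"
  shows "w \<in> C"
  using assms
proof (induction rule: rtrancl_induct)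
  case base then show ?case by simp
next
  case (step z z')
  then show ?case by (auto simp: adj_iff)
qed

lemma conn_union:
  assumes "connected_graph S A" "connected_graph S' B" "S \<inter> S' \<noteq> {}"
  shows "connected_graph (S \<union> S') (A \<union> B)"
proof -
  obtain w where w: "w \<in> S" "w \<in> S'" using assms(3) by auto
  have A: "\<forall>a\<in>S. \<forall>b\<in>S. (a,b) \<in> (adj (A\<union>B))\<^sup>*"
    using assms(1) rt_mono[of A "A\<union>B"] unfolding connected_graph_def by blast
  have B: "\<forall>a\<in>S'. \<forall>b\<in>S'. (a,b) \<in> (adj (A\<union>B))\<^sup>*"
    using assms(2) rt_mono[of B "A\<union>B"] unfolding connected_graph_def by blast
  have "\<forall>a\<in>S\<union>S'. \<forall>b\<in>S\<union>S'. (a,b) \<in> (adj (A\<union>B))\<^sup>*"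
  proof (intro ballI)
    fix a b assume "a \<in> S \<union> S'" "b \<in> S \<union> S'"
    have "(a,w) \<in> (adj (A\<union>B))\<^sup>*" using A B w \<open>a \<in> S \<union> S'\<close> by blast
    moreover have "(w,b) \<in> (adj (A\<union>B))\<^sup>*" using A B w \<open>b \<in> S \<union> S'\<close> by blast
    ultimately show "(a,b) \<in> (adj (A\<union>B))\<^sup>*" by (rule rtrancl_trans)
  qed
  then show ?thesis using assms unfolding connected_graph_def by auto
qed

lemma conn_minus: "two_ec S F \<Longrightarrow> connected_graph S (F - {g})"
  unfolding two_ec_def by (cases "g \<in> F") auto

lemma two_ec_union:
  assumes "two_ec S F" "two_ec S' F'" "S \<inter> S' \<noteq> {}"
  shows "two_ec (S \<union> S') (F \<union> F')"
proof -
  have "connected_graph (S \<union> S') (F \<union> F')"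
    using conn_union assms unfolding two_ec_def by blast
  moreover have "\<forall>g\<in>F\<union>F'. connected_graph (S \<union> S') ((F \<union> F') - {g})"
  proof
    fix g
    have "(F \<union> F') - {g} = (F - {g}) \<union> (F' - {g})" by auto
    then show "connected_graph (S \<union> S') ((F \<union> F') - {g})"
      using conn_union[OF conn_minus[OF assms(1)] conn_minus[OF assms(2)] assms(3)] by simp
  qed
  ultimately show ?thesis unfolding two_ec_def by simp
qed



locale G2 =
  fixes V :: "'a set" and H :: "'a set set"
  assumes finV: "finite V"
    and edg: "\<forall>g\<in>H. g \<subseteq> V \<and> card g = 2"
    and cov: "\<forall>v\<in>V. 2 \<le> card {g\<in>H. v\<in>g}"
begin

lemma finH: "finite H"
proof -
  have "H \<subseteq> Pow V" using edg by auto
  moreover have "finite (Pow V)" using finV by simp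
  ultimately show ?thesis by (rule finite_subset)
qed

lemma edge2: "g \<in> H \<Longrightarrow> \<exists>x y. g = {x,y} \<and> x \<noteq> y"
proof -
  assume "g \<in> H"
  then have "card g = 2" using edg by auto
  then show ?thesis by (simp add: card_2_iff)
qed

lemma comp_sub: "C \<in> comps V H \<Longrightarrow> C \<subseteq> V"
  unfolding comps_def by auto

lemma finC: "finite (comps V H)"
proof -
  have "comps V H \<subseteq> Pow V" using comp_sub by auto
  moreover have "finite (Pow V)" using finV by simp
  ultimately show ?thesis by (rule finite_subset)
qed

lemma comp_self: "C \<in> comps V H \<Longrightarrow> \<exists>c\<in>C. C = {u\<in>V. (c,u) \<in> (adj H)\<^sup>*}"
  unfolding comps_def by auto

lemma comp_mem: "C \<in> comps V H \<Longrightarrow> x \<in> C \<Longrightarrow> C = {u\<in>V. (x,u) \<in> (adj H)\<^sup>*}"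
proof -
  assume C: "C \<in> comps V H" and x: "x \<in> C"
  then obtain c where c: "c \<in> V" "C = {u\<in>V. (c,u) \<in> (adj H)\<^sup>*}" unfolding comps_def by auto
  then have cx: "(c,x) \<in> (adj H)\<^sup>*" using x by auto
  show ?thesis
  proof (rule set_eqI)
    fix u show "u \<in> C \<longleftrightarrow> u \<in> {u\<in>V. (x,u) \<in> (adj H)\<^sup>*}"
      using c cx rt_sym[OF cx] by (auto intro: rtrancl_trans)
  qed
qed

lemma comp_nonempty: "C \<in> comps V H \<Longrightarrow> C \<noteq> {}"
  unfolding comps_def by auto

lemma comp_eq: "C \<in> comps V H \<Longrightarrow> C' \<in> comps V H \<Longrightarrow> x \<in> C \<Longrightarrow> x \<in> C' \<Longrightarrow> C = C'"
proof -
  assume a: "C \<in> comps V H" "C' \<in> comps V H" "x \<in> C" "x \<in> C'"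
  have "C = {u\<in>V. (x,u) \<in> (adj H)\<^sup>*}" using comp_mem[OF a(1) a(3)] .
  also have "\<dots> = C'" using comp_mem[OF a(2) a(4)] by simp
  finally show ?thesis .
qed

lemma comp_edge: "C \<in> comps V H \<Longrightarrow> x \<in> C \<Longrightarrow> g \<in> H \<Longrightarrow> x \<in> g \<Longrightarrow> g \<subseteq> C"
proof
  fix w assume C: "C \<in> comps V H" and x: "x \<in> C" and g: "g \<in> H" "x \<in> g" and w: "w \<in> g"
  have "(x,w) \<in> adj H" using g w by (auto simp: adj_iff)
  moreover have "w \<in> V" using g w edg by auto
  ultimately show "w \<in> C" using comp_mem[OF C x] by auto
qed

lemma comp_edge_eq: "C \<in> comps V H \<Longrightarrow> C' \<in> comps V H \<Longrightarrow> g \<in> H \<Longrightarrow> g \<subseteq> C \<Longrightarrow> g \<subseteq> C' \<Longrightarrow> C = C'"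
proof -
  assume a: "C \<in> comps V H" "C' \<in> comps V H" "g \<in> H" "g \<subseteq> C" "g \<subseteq> C'"
  obtain x y where "g = {x,y}" using edge2[OF a(3)] by blast
  then have "x \<in> C" "x \<in> C'" using a by auto
  then show ?thesis using comp_eq[OF a(1,2)] by blast
qed

lemma comp_conn: "C \<in> comps V H \<Longrightarrow> connected_graph C (comp_edges H C)"
proof -
  assume C: "C \<in> comps V H"
  then obtain c where c: "c \<in> C" "C = {u\<in>V. (c,u) \<in> (adj H)\<^sup>*}" using comp_self by blast
  have cV: "c \<in> V" using c by auto
  have reachV: "{w. (c,w) \<in> (adj H)\<^sup>*} \<subseteq> C"
  proof
    fix w assume "w \<in> {w. (c,w) \<in> (adj H)\<^sup>*}"
    then have "(c,w) \<in> (adj H)\<^sup>*" by simp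
    moreover have "w \<in> V" using rt_stay[OF calculation cV] edg by auto
    ultimately show "w \<in> C" using c by auto
  qed
  have cr: "(c,a) \<in> (adj (comp_edges H C))\<^sup>*" if "a \<in> C" for a
  proof -
    have "(c,a) \<in> (adj H)\<^sup>*" using that c by auto
    then have "(c,a) \<in> (adj {h\<in>H. h \<subseteq> {w. (c,w) \<in> (adj H)\<^sup>*}})\<^sup>*" by (rule rt_restrict)
    moreover have "{h\<in>H. h \<subseteq> {w. (c,w) \<in> (adj H)\<^sup>*}} \<subseteq> comp_edges H C"
      using reachV unfolding comp_edges_def by auto
    ultimately show ?thesis by (rule rt_mono[rotated])
  qed
  show ?thesis unfolding connected_graph_def
  proof (intro conjI ballI)
    show "C \<noteq> {}" using c by auto
  next
    fix e assume "e \<in> comp_edges H C" then show "e \<subseteq> C" unfolding comp_edges_def by auto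
  next
    fix u v assume "u \<in> C" "v \<in> C"
    then show "(u,v) \<in> (adj (comp_edges H C))\<^sup>*" using cr rt_sym by (meson rtrancl_trans)
  qed
qed

lemma conn_if_reach:
  assumes C: "C \<in> comps V H" and e: "e \<in> comp_edges H C" "e \<subseteq> {x,y}"
    and xy: "(x,y) \<in> (adj (comp_edges H C - {e}))\<^sup>*"
  shows "connected_graph C (comp_edges H C - {e})"
  using comp_conn[OF C] rt_replace[OF xy e(2)] unfolding connected_graph_def by blast

end



context G2
begin

lemma leaf_exists:
  assumes C: "C \<in> comps V H" and nC: "\<not> two_ec C (comp_edges H C)"
  shows "card U = n \<Longrightarrow> e \<in> H \<Longrightarrow> e \<subseteq> C \<Longrightarrow> e = {u,v} \<Longrightarrow>
    U = {z\<in>C. (u,z) \<in> (adj (comp_edges H C - {e}))\<^sup>*} \<Longrightarrow> v \<notin> U \<Longrightarrow>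
    \<exists>S F. (S,F) \<in> blocks V H \<and> leaf_block V H S \<and> S \<subseteq> U"
proof (induction n arbitrary: U u v e rule: less_induct)
  case (less n)
  let ?CE = "comp_edges H C"
  have uC: "u \<in> C" and vC: "v \<in> C" using less.prems by auto
  have eCE: "e \<in> ?CE" using less.prems unfolding comp_edges_def by auto
  have uU: "u \<in> U" using less.prems uC by auto
  have UC: "U \<subseteq> C" using less.prems by auto
  have finC: "finite C" using finite_subset[OF comp_sub[OF C] finV] .
  have finU: "finite U" using finite_subset[OF UC finC] .
  have CEsubC: "\<forall>h\<in>?CE - {e}. h \<subseteq> C" unfolding comp_edges_def by auto
  have Umem: "a \<in> U" if "(u,a) \<in> (adj (?CE - {e}))\<^sup>*" for a
  proof -
    have "a \<in> C" using rt_stay[OF that uC CEsubC] .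
    then show ?thesis using that less.prems by auto
  qed
  have Umem2: "(u,a) \<in> (adj (?CE - {e}))\<^sup>*" if "a \<in> U" for a
    using that less.prems by auto
  show ?case
  proof (cases "\<exists>f\<in>?CE. f \<subseteq> U \<and> \<not> connected_graph C (?CE - {f})")
    case True
    then obtain f where f: "f \<in> ?CE" "f \<subseteq> U" "\<not> connected_graph C (?CE - {f})" by blast
    have fH: "f \<in> H" and fC: "f \<subseteq> C" using f unfolding comp_edges_def by auto
    obtain x y where xy: "f = {x,y}" "x \<noteq> y" using edge2[OF fH] by blast
    let ?R = "adj (?CE - {f})"
    have nxy: "(x,y) \<notin> ?R\<^sup>*"
      using conn_if_reach[OF C f(1), of x y] xy f(3) by auto
    obtain p q where pq: "f = {p,q}" "(p,q) \<notin> ?R\<^sup>*" "(p,v) \<notin> ?R\<^sup>*"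
    proof (cases "(x,v) \<in> ?R\<^sup>*")
      case True
      have "(y,v) \<notin> ?R\<^sup>*"
      proof
        assume yv: "(y,v) \<in> ?R\<^sup>*"
        have "(x,y) \<in> ?R\<^sup>*" using rtrancl_trans[OF True rt_sym[OF yv]] .
        then show False using nxy by simp
      qed
      moreover have "(y,x) \<notin> ?R\<^sup>*" using nxy rt_sym[of y x] by auto
      moreover have "f = {y,x}" using xy by auto
      ultimately show ?thesis using that by blast
    next
      case False
      then show ?thesis using that xy nxy by blast
    qed
    define Z where "Z = {z\<in>C. (p,z) \<in> ?R\<^sup>*}"
    have pU: "p \<in> U" using pq f by auto
    have qU: "q \<in> U" using pq f by auto
    have qZ: "q \<notin> Z" using pq unfolding Z_def by auto
    have vZ: "v \<notin> Z" using pq unfolding Z_def by auto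
    have ZU_aux: "(p,z) \<in> ?R\<^sup>* \<Longrightarrow> z \<in> U" for z
    proof (induction rule: rtrancl_induct)
      case base then show ?case using pU .
    next
      case (step z z')
      from step(2) obtain g where g: "g \<in> ?CE - {f}" "z \<in> g" "z' \<in> g" by (auto simp: adj_iff)
      have pz': "(p,z') \<in> ?R\<^sup>*" using step(1,2) by simp
      show ?case
      proof (cases "g = e")
        case True
        then have "z' = u \<or> z' = v" using g less.prems by auto
        moreover have "z' \<noteq> v" using pz' vC pq by auto
        ultimately show ?thesis using uU by auto
      next
        case False
        then have "(z,z') \<in> adj (?CE - {e})" using g by (auto simp: adj_iff)
        then have "(u,z') \<in> (adj (?CE - {e}))\<^sup>*" using Umem2[OF step(3)] by simp
        then show ?thesis by (rule Umem)
      qed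
    qed
    have ZU: "Z \<subseteq> U" using ZU_aux unfolding Z_def by auto
    have ZlU: "card Z < card U"
    proof (rule psubset_card_mono[OF finU])
      show "Z \<subset> U" using ZU qU qZ by blast
    qed
    have "\<exists>S F. (S,F) \<in> blocks V H \<and> leaf_block V H S \<and> S \<subseteq> Z"
      using less.IH[OF ZlU[unfolded less.prems(1)] refl fH fC pq(1)] Z_def qZ by blast
    then show ?thesis using ZU by blast
  next
    case False
    then have nb: "\<forall>f\<in>?CE. f \<subseteq> U \<longrightarrow> connected_graph C (?CE - {f})" by blast
    define FU where "FU = comp_edges H U"
    have eU: "\<not> e \<subseteq> U" using less.prems by auto
    have FUsub: "FU \<subseteq> ?CE - {e}" using UC eU unfolding FU_def comp_edges_def by auto
    have edge_in_U: "g \<subseteq> U" if "g \<in> ?CE - {e}" "z \<in> g" "z \<in> U" for g z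
    proof
      fix w assume "w \<in> g"
      then have "(z,w) \<in> adj (?CE - {e})" using that by (auto simp: adj_iff)
      then have "(u,w) \<in> (adj (?CE - {e}))\<^sup>*" using Umem2[OF that(3)] by simp
      then show "w \<in> U" by (rule Umem)
    qed
    have conn1: "connected_graph U FU"
    proof -
      have cr: "(u,a) \<in> (adj FU)\<^sup>*" if "a \<in> U" for a
      proof -
        have "(u,a) \<in> (adj {h\<in>?CE - {e}. h \<subseteq> {w. (u,w) \<in> (adj (?CE - {e}))\<^sup>*}})\<^sup>*"
          by (rule rt_restrict[OF Umem2[OF that]])
        moreover have "{h\<in>?CE - {e}. h \<subseteq> {w. (u,w) \<in> (adj (?CE - {e}))\<^sup>*}} \<subseteq> FU"
          using Umem unfolding FU_def comp_edges_def by auto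
        ultimately show ?thesis by (rule rt_mono[rotated])
      qed
      show ?thesis unfolding connected_graph_def
      proof (intro conjI ballI)
        show "U \<noteq> {}" using uU by auto
      next
        fix g assume "g \<in> FU" then show "g \<subseteq> U" unfolding FU_def comp_edges_def by auto
      next
        fix a b assume "a \<in> U" "b \<in> U"
        then show "(a,b) \<in> (adj FU)\<^sup>*" using cr rt_sym by (meson rtrancl_trans)
      qed
    qed
    have conn2: "connected_graph U (FU - {f})" if fFU: "f \<in> FU" for f
    proof -
      have fCE: "f \<in> ?CE" and fU: "f \<subseteq> U" using fFU UC unfolding FU_def comp_edges_def by auto
      have cC: "connected_graph C (?CE - {f})" using nb fCE fU by blast
      have inv: "(u,w) \<in> (adj (?CE - {f}))\<^sup>* \<Longrightarrow> (u,w) \<in> (adj (FU - {f}))\<^sup>* \<or> w \<notin> U" for w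
      proof (induction rule: rtrancl_induct)
        case base then show ?case by simp
      next
        case (step z z')
        from step(2) obtain g where g: "g \<in> ?CE - {f}" "z \<in> g" "z' \<in> g" by (auto simp: adj_iff)
        show ?case
        proof (cases "g = e")
          case True
          then have "z' = u \<or> z' = v" using g less.prems by auto
          then show ?thesis using less.prems(6) by auto
        next
          case False
          then have gE: "g \<in> ?CE - {e}" using g by auto
          show ?thesis
          proof (cases "z \<in> U")
            case True
            then have zR: "(u,z) \<in> (adj (FU - {f}))\<^sup>*" using step(3) by simp
            have "g \<subseteq> U" using edge_in_U[OF gE g(2) True] .
            then have "g \<in> FU - {f}" using g unfolding FU_def comp_edges_def by auto
            then have "(z,z') \<in> adj (FU - {f})" using g by (auto simp: adj_iff)
            then show ?thesis using rtrancl_into_rtrancl[OF zR] by blast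
          next
            case False
            have "z' \<notin> U"
            proof
              assume "z' \<in> U"
              then have "g \<subseteq> U" using edge_in_U[OF gE g(3)] by simp
              then show False using False g by auto
            qed
            then show ?thesis by simp
          qed
        qed
      qed
      have cr: "(u,a) \<in> (adj (FU - {f}))\<^sup>*" if "a \<in> U" for a
      proof -
        have "(u,a) \<in> (adj (?CE - {f}))\<^sup>*" using cC uC UC that unfolding connected_graph_def by auto
        then show ?thesis using inv that by blast
      qed
      show ?thesis unfolding connected_graph_def
      proof (intro conjI ballI)
        show "U \<noteq> {}" using uU by auto
      next
        fix g assume "g \<in> FU - {f}" then show "g \<subseteq> U" unfolding FU_def comp_edges_def by auto
      next
        fix a b assume "a \<in> U" "b \<in> U"
        then show "(a,b) \<in> (adj (FU - {f}))\<^sup>*" using cr rt_sym by (meson rtrancl_trans)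
      qed
    qed
    have twoU: "two_ec U FU" unfolding two_ec_def using conn1 conn2 by blast
    have card2: "2 \<le> card U"
    proof -
      have uV: "u \<in> V" using uC comp_sub[OF C] by auto
      have c2: "2 \<le> card {g\<in>H. u\<in>g}" using cov uV by auto
      have "\<not> {g\<in>H. u\<in>g} \<subseteq> {e}"
      proof
        assume "{g\<in>H. u\<in>g} \<subseteq> {e}"
        then have "card {g\<in>H. u\<in>g} \<le> card {e}" using card_mono[of "{e}"] by simp
        then show False using c2 by simp
      qed
      then obtain g where g: "g \<in> H" "u \<in> g" "g \<noteq> e" by blast
      have gC: "g \<subseteq> C" using comp_edge[OF C uC g(1,2)] .
      obtain a b where ab: "g = {a,b}" "a \<noteq> b" using edge2[OF g(1)] by blast
      obtain w where w: "w \<in> g" "w \<noteq> u" using ab by auto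
      have "g \<in> ?CE - {e}" using g gC unfolding comp_edges_def by auto
      then have "w \<in> U" using edge_in_U[OF _ g(2) uU] w by auto
      then have "{u,w} \<subseteq> U" using uU by auto
      then have "card {u,w} \<le> card U" using finU by (simp add: card_mono)
      then show ?thesis using w by simp
    qed
    define P where "P = {(S,F). S \<subseteq> C \<and> F \<subseteq> ?CE \<and> two_ec S F}"
    have finCE: "finite ?CE" using finH unfolding comp_edges_def by auto
    have "P \<subseteq> Pow C \<times> Pow ?CE" unfolding P_def by auto
    moreover have "finite (Pow C \<times> Pow ?CE)" using finCE finC by simp
    ultimately have finP: "finite P" by (rule finite_subset)
    have UP: "(U, FU) \<in> P" unfolding P_def using UC FUsub twoU by auto
    obtain m where m: "m \<in> P" "(U,FU) \<le> m" "\<forall>b\<in>P. m \<le> b \<longrightarrow> m = b"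
      using finite_has_maximal2[OF finP UP] by blast
    obtain S F where mSF: "m = (S,F)" by (cases m)
    have SC: "S \<subseteq> C" and FCE: "F \<subseteq> ?CE" and twoS: "two_ec S F" using m(1) mSF unfolding P_def by auto
    have US: "U \<subseteq> S" using m(2) mSF by (simp add: less_eq_prod_def)
    have SU: "S \<subseteq> U"
    proof
      fix s assume s: "s \<in> S"
      have "connected_graph S (F - {e})" by (rule conn_minus[OF twoS])
      then have "(u,s) \<in> (adj (F - {e}))\<^sup>*" using s US uU unfolding connected_graph_def by auto
      moreover have "F - {e} \<subseteq> ?CE - {e}" using FCE by auto
      ultimately have "(u,s) \<in> (adj (?CE - {e}))\<^sup>*" by (rule rt_mono[rotated])
      then show "s \<in> U" by (rule Umem)
    qed
    have SeqU: "S = U" using SU US by auto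
    have blk: "(S,F) \<in> blocks V H"
      unfolding blocks_def
    proof (clarify, intro bexI[of _ C] conjI allI impI)
      show "C \<in> comps V H" by (rule C)
      show "\<not> two_ec C ?CE" by (rule nC)
      show "S \<subseteq> C" by (rule SC)
      show "F \<subseteq> ?CE" by (rule FCE)
      show "two_ec S F" by (rule twoS)
      show "2 \<le> card S" using card2 SeqU by simp
    next
      fix S' F' assume a: "S \<subseteq> S' \<and> F \<subseteq> F' \<and> S' \<subseteq> C \<and> F' \<subseteq> ?CE \<and> two_ec S' F'"
      then have "(S',F') \<in> P" unfolding P_def by auto
      moreover have "m \<le> (S',F')" using a mSF by (simp add: less_eq_prod_def)
      ultimately have "m = (S',F')" using m(3) by blast
      then show "S' = S" "F' = F" using mSF by auto
    qed
    have ebr: "e \<in> bridges V H"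
      unfolding bridges_def
    proof (intro CollectI conjI bexI[of _ C])
      show "e \<in> H" using less.prems by simp
      show "C \<in> comps V H" by (rule C)
      show "\<not> two_ec C ?CE" by (rule nC)
      show "e \<subseteq> C" using less.prems by simp
      show "\<not> connected_graph C (?CE - {e})"
      proof
        assume "connected_graph C (?CE - {e})"
        then have "(u,v) \<in> (adj (?CE - {e}))\<^sup>*" using uC vC unfolding connected_graph_def by auto
        then show False using Umem less.prems(6) by blast
      qed
    qed
    have leafset: "{g\<in>bridges V H. g \<inter> U \<noteq> {}} = {e}"
    proof (rule set_eqI, rule iffI)
      fix g assume "g \<in> {g\<in>bridges V H. g \<inter> U \<noteq> {}}"
      then have gb: "g \<in> bridges V H" and gU: "g \<inter> U \<noteq> {}" by auto
      from gb obtain C0 where g: "g \<in> H" "C0 \<in> comps V H" "g \<subseteq> C0"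
          "\<not> connected_graph C0 (comp_edges H C0 - {g})"
        unfolding bridges_def by blast
      obtain z where z: "z \<in> g" "z \<in> U" using gU by auto
      have "C0 = C" using comp_eq[OF g(2) C, of z] z g(3) UC by auto
      show "g \<in> {e}"
      proof (rule ccontr)
        assume "g \<notin> {e}"
        then have gE: "g \<in> ?CE - {e}" using g \<open>C0 = C\<close> unfolding comp_edges_def by auto
        have "g \<subseteq> U" using edge_in_U[OF gE z] .
        then show False using nb gE g(4) \<open>C0 = C\<close> by auto
      qed
    next
      fix g assume "g \<in> {e}"
      then show "g \<in> {g\<in>bridges V H. g \<inter> U \<noteq> {}}" using ebr uU less.prems(4) by auto
    qed
    have "leaf_block V H S" unfolding leaf_block_def using leafset SeqU by simp
    then show ?thesis using blk SeqU by blast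
  qed
qed

end



context G2
begin

lemma blk_unfold:
  assumes "(S,F) \<in> blocks V H"
  shows "\<exists>C\<in>comps V H. \<not> two_ec C (comp_edges H C) \<and> S \<subseteq> C \<and> F \<subseteq> comp_edges H C \<and>
      two_ec S F \<and> 2 \<le> card S \<and>
      (\<forall>S' F'. S \<subseteq> S' \<and> F \<subseteq> F' \<and> S' \<subseteq> C \<and> F' \<subseteq> comp_edges H C \<and> two_ec S' F'
          \<longrightarrow> S' = S \<and> F' = F)"
  using assms unfolding blocks_def by blast

lemma blk_ne: "(S,F) \<in> blocks V H \<Longrightarrow> S \<noteq> {}"
  using blk_unfold by fastforce

lemma two_ec_edge: "two_ec S F \<Longrightarrow> g \<in> F \<Longrightarrow> g \<subseteq> S"
  unfolding two_ec_def connected_graph_def by blast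

lemma blk_disj:
  assumes b: "(S,F) \<in> blocks V H" and b': "(S',F') \<in> blocks V H" and g: "g \<in> F" "g \<in> F'"
  shows "(S,F) = (S',F')"
proof -
  obtain C where C: "C \<in> comps V H" "S \<subseteq> C" "F \<subseteq> comp_edges H C" "two_ec S F"
    "\<forall>S2 F2. S \<subseteq> S2 \<and> F \<subseteq> F2 \<and> S2 \<subseteq> C \<and> F2 \<subseteq> comp_edges H C \<and> two_ec S2 F2
          \<longrightarrow> S2 = S \<and> F2 = F"
    using blk_unfold[OF b] by blast
  obtain C' where C': "C' \<in> comps V H" "S' \<subseteq> C'" "F' \<subseteq> comp_edges H C'" "two_ec S' F'"
    "\<forall>S2 F2. S' \<subseteq> S2 \<and> F' \<subseteq> F2 \<and> S2 \<subseteq> C' \<and> F2 \<subseteq> comp_edges H C' \<and> two_ec S2 F2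
          \<longrightarrow> S2 = S' \<and> F2 = F'"
    using blk_unfold[OF b'] by blast
  have gH: "g \<in> H" using g C(3) unfolding comp_edges_def by auto
  have gS: "g \<subseteq> S" using two_ec_edge[OF C(4) g(1)] .
  have gS': "g \<subseteq> S'" using two_ec_edge[OF C'(4) g(2)] .
  have CC: "C = C'" using comp_edge_eq[OF C(1) C'(1) gH order_trans[OF gS C(2)] order_trans[OF gS' C'(2)]] .
  obtain x y where "g = {x,y}" using edge2[OF gH] by blast
  then have ne: "S \<inter> S' \<noteq> {}" using gS gS' by auto
  have u: "two_ec (S \<union> S') (F \<union> F')" using two_ec_union[OF C(4) C'(4) ne] .
  have "S \<union> S' = S \<and> F \<union> F' = F" using C(5)[rule_format, of "S \<union> S'" "F \<union> F'"] u C(2,3) C'(2,3) CC by auto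
  moreover have "S \<union> S' = S' \<and> F \<union> F' = F'" using C'(5)[rule_format, of "S \<union> S'" "F \<union> F'"] u C(2,3) C'(2,3) CC by auto
  ultimately show ?thesis by auto
qed

lemma blk_nonbridge:
  assumes b: "(S,F) \<in> blocks V H" and g: "g \<in> F"
  shows "g \<notin> bridges V H"
proof
  assume gb: "g \<in> bridges V H"
  then obtain C0 where C0: "g \<in> H" "C0 \<in> comps V H" "g \<subseteq> C0"
      "\<not> connected_graph C0 (comp_edges H C0 - {g})"
    unfolding bridges_def by blast
  obtain C where C: "C \<in> comps V H" "S \<subseteq> C" "F \<subseteq> comp_edges H C" "two_ec S F"
    using blk_unfold[OF b] by blast
  have gS: "g \<subseteq> S" using two_ec_edge[OF C(4) g] .
  have CC: "C0 = C" using comp_edge_eq[OF C0(2) C(1) C0(1) C0(3) order_trans[OF gS C(2)]] .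
  obtain x y where xy: "g = {x,y}" using edge2[OF C0(1)] by blast
  have "connected_graph S (F - {g})" using conn_minus[OF C(4)] .
  then have "(x,y) \<in> (adj (F - {g}))\<^sup>*" using gS xy unfolding connected_graph_def by auto
  moreover have "F - {g} \<subseteq> comp_edges H C - {g}" using C(3) by auto
  ultimately have "(x,y) \<in> (adj (comp_edges H C - {g}))\<^sup>*" by (rule rt_mono[rotated])
  moreover have "g \<in> comp_edges H C" using g C(3) by auto
  ultimately have "connected_graph C (comp_edges H C - {g})"
    using conn_if_reach[OF C(1)] xy by blast
  then show False using C0(4) CC by simp
qed

lemma two_leaves:
  assumes C: "C \<in> comps V H" and nC: "\<not> two_ec C (comp_edges H C)"
  shows "\<exists>b1 b2. b1 \<in> blocks V H \<and> b2 \<in> blocks V H \<and> b1 \<noteq> b2 \<and>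
     leaf_block V H (fst b1) \<and> leaf_block V H (fst b2) \<and> fst b1 \<subseteq> C \<and> fst b2 \<subseteq> C"
proof -
  let ?CE = "comp_edges H C"
  have cc: "connected_graph C ?CE" using comp_conn[OF C] .
  then obtain e where e: "e \<in> ?CE" "\<not> connected_graph C (?CE - {e})"
    using nC unfolding two_ec_def by blast
  have eH: "e \<in> H" and eC: "e \<subseteq> C" using e unfolding comp_edges_def by auto
  obtain u v where uv: "e = {u,v}" "u \<noteq> v" using edge2[OF eH] by blast
  let ?R = "adj (?CE - {e})"
  have nuv: "(u,v) \<notin> ?R\<^sup>*" using conn_if_reach[OF C e(1), of u v] uv e(2) by auto
  define U where "U = {z\<in>C. (u,z) \<in> ?R\<^sup>*}"
  define W where "W = {z\<in>C. (v,z) \<in> ?R\<^sup>*}"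
  have vU: "v \<notin> U" using nuv unfolding U_def by auto
  have uW: "u \<notin> W" using nuv rt_sym[of v u] unfolding W_def by auto
  obtain S1 F1 where b1: "(S1,F1) \<in> blocks V H" "leaf_block V H S1" "S1 \<subseteq> U"
    using leaf_exists[OF C nC refl eH eC uv(1) U_def vU] by blast
  have e': "e = {v,u}" using uv by auto
  obtain S2 F2 where b2: "(S2,F2) \<in> blocks V H" "leaf_block V H S2" "S2 \<subseteq> W"
    using leaf_exists[OF C nC refl eH eC e' W_def uW] by blast
  have UW: "U \<inter> W = {}"
  proof (rule ccontr)
    assume "U \<inter> W \<noteq> {}"
    then obtain z where "(u,z) \<in> ?R\<^sup>*" "(v,z) \<in> ?R\<^sup>*" unfolding U_def W_def by auto
    then have "(u,v) \<in> ?R\<^sup>*" using rt_sym[of v z] rtrancl_trans by metis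
    then show False using nuv by simp
  qed
  have "S1 \<noteq> S2" using blk_ne[OF b1(1)] b1(3) b2(3) UW by auto
  moreover have "U \<subseteq> C" "W \<subseteq> C" unfolding U_def W_def by auto
  ultimately show ?thesis using b1 b2
    by (intro exI[of _ "(S1,F1)"] exI[of _ "(S2,F2)"]) auto
qed

lemma finBl: "finite (blocks V H)"
proof -
  have "blocks V H \<subseteq> Pow V \<times> Pow H"
  proof
    fix b assume "b \<in> blocks V H"
    then obtain S F where bSF: "b = (S,F)" "(S,F) \<in> blocks V H" by (cases b) auto
    then obtain C where "C \<in> comps V H" "S \<subseteq> C" "F \<subseteq> comp_edges H C"
      using blk_unfold by blast
    then show "b \<in> Pow V \<times> Pow H" using bSF comp_sub[of C] unfolding comp_edges_def by auto
  qed
  moreover have "finite (Pow V \<times> Pow H)" using finV finH by simp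
  ultimately show ?thesis by (rule finite_subset)
qed

end



context G2
begin

lemma credit_bound:
  assumes "two_ec C (comp_edges H C)"
  shows "comp_credit H C \<le> 3/10 * real (card (comp_edges H C))
     + (if is_cycle C (comp_edges H C) 3 then real (card (comp_edges H C)) / 30 else 0)"
proof -
  let ?k = "card (comp_edges H C)"
  consider (a) "7 \<le> ?k" | (b) "\<not> 7 \<le> ?k" "is_cycle C (comp_edges H C) 3" | (c) "\<not> 7 \<le> ?k" "\<not> is_cycle C (comp_edges H C) 3" by blast
  then show ?thesis
  proof cases
    case a
    then have "(7::real) \<le> real ?k" by simp
    then show ?thesis using assms unfolding comp_credit_def by auto
  next
    case b
    then have "?k = 3" unfolding is_cycle_def by auto
    then show ?thesis using assms b unfolding comp_credit_def by auto
  next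
    case c
    then show ?thesis using assms unfolding comp_credit_def by auto
  qed
qed

lemma CE_disj: "C \<in> comps V H \<Longrightarrow> C' \<in> comps V H \<Longrightarrow> C \<noteq> C' \<Longrightarrow> comp_edges H C \<inter> comp_edges H C' = {}"
  using comp_edge_eq unfolding comp_edges_def by blast

lemma finCE: "finite (comp_edges H C)"
  using finH unfolding comp_edges_def by auto

lemma card_UN_CE: "T \<subseteq> comps V H \<Longrightarrow> card (\<Union>(comp_edges H ` T)) = (\<Sum>C\<in>T. card (comp_edges H C))"
proof (rule card_UN_disjoint)
  assume "T \<subseteq> comps V H"
  then show "finite T" using finC finite_subset by auto
  show "\<forall>i\<in>T. finite (comp_edges H i)" using finCE by auto
  show "\<forall>i\<in>T. \<forall>j\<in>T. i \<noteq> j \<longrightarrow> comp_edges H i \<inter> comp_edges H j = {}"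
    using CE_disj \<open>T \<subseteq> comps V H\<close> by blast
qed

lemma blocks_bound:
  assumes sz: "\<forall>(S, F)\<in>blocks V H. (leaf_block V H S \<longrightarrow> 6 \<le> card F) \<and> (\<not> leaf_block V H S \<longrightarrow> 4 \<le> card F)"
  shows "real (card (blocks V H)) + real (card {C\<in>comps V H. \<not> two_ec C (comp_edges H C)})
     \<le> 3/10 * (\<Sum>b\<in>blocks V H. real (card (snd b)))"
proof -
  define N where "N = {C\<in>comps V H. \<not> two_ec C (comp_edges H C)}"
  define Bl where "Bl = blocks V H"
  define f where "f b = 3/10 * real (card (snd b)) - 1" for b :: "'a set \<times> 'a set set"
  define BC where "BC C = {b\<in>Bl. fst b \<subseteq> C}" for C
  have finN: "finite N" unfolding N_def using finC by auto
  have finB: "finite Bl" unfolding Bl_def using finBl .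
  have f0: "f b \<ge> 0" if "b \<in> Bl" for b
  proof -
    obtain S F where "b = (S,F)" by (cases b)
    then have "4 \<le> card (snd b)" using sz that unfolding Bl_def by (cases "leaf_block V H S") auto
    then show ?thesis unfolding f_def by simp
  qed
  have fl: "f b \<ge> 4/5" if "b \<in> Bl" "leaf_block V H (fst b)" for b
  proof -
    obtain S F where "b = (S,F)" by (cases b)
    then have "6 \<le> card (snd b)" using sz that unfolding Bl_def by auto
    then show ?thesis unfolding f_def by simp
  qed
  have BlU: "Bl = \<Union>(BC ` N)"
  proof
    show "Bl \<subseteq> \<Union>(BC ` N)"
    proof
      fix b assume b: "b \<in> Bl"
      obtain S F where SF: "b = (S,F)" by (cases b)
      then obtain C where "C \<in> comps V H" "\<not> two_ec C (comp_edges H C)" "S \<subseteq> C"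
        using blk_unfold b unfolding Bl_def by blast
      then show "b \<in> \<Union>(BC ` N)" unfolding BC_def N_def using b SF by auto
    qed
    show "\<Union>(BC ` N) \<subseteq> Bl" unfolding BC_def by auto
  qed
  have disj: "\<forall>i\<in>N. \<forall>j\<in>N. i \<noteq> j \<longrightarrow> BC i \<inter> BC j = {}"
  proof (intro ballI impI)
    fix i j assume ij: "i \<in> N" "j \<in> N" "i \<noteq> j"
    show "BC i \<inter> BC j = {}"
    proof (rule ccontr)
      assume "BC i \<inter> BC j \<noteq> {}"
      then obtain b where b: "b \<in> Bl" "fst b \<subseteq> i" "fst b \<subseteq> j" unfolding BC_def by auto
      obtain S F where SF: "b = (S,F)" by (cases b)
      then have "S \<noteq> {}" using blk_ne b unfolding Bl_def by auto
      then obtain x where "x \<in> i" "x \<in> j" using b SF by auto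
      then show False using comp_eq ij unfolding N_def by blast
    qed
  qed
  have "(\<Sum>b\<in>Bl. f b) = (\<Sum>C\<in>N. \<Sum>b\<in>BC C. f b)"
    unfolding BlU by (rule sum.UNION_disjoint[OF finN _ disj]) (auto simp: BC_def finB)
  also have "\<dots> \<ge> (\<Sum>C\<in>N. 1)"
  proof (rule sum_mono)
    fix C assume CN: "C \<in> N"
    then obtain b1 b2 where bb: "b1 \<in> Bl" "b2 \<in> Bl" "b1 \<noteq> b2" "leaf_block V H (fst b1)"
        "leaf_block V H (fst b2)" "fst b1 \<subseteq> C" "fst b2 \<subseteq> C"
      using two_leaves unfolding N_def Bl_def by blast
    have sub: "{b1,b2} \<subseteq> BC C" using bb unfolding BC_def by auto
    have finBC: "finite (BC C)" unfolding BC_def using finB by auto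
    have "(\<Sum>b\<in>{b1,b2}. f b) \<le> (\<Sum>b\<in>BC C. f b)"
      by (rule sum_mono2[OF finBC sub]) (auto simp: BC_def intro: f0)
    moreover have "(\<Sum>b\<in>{b1,b2}. f b) = f b1 + f b2" using bb(3) by simp
    moreover have "f b1 + f b2 \<ge> 1" using fl[OF bb(1,4)] fl[OF bb(2,5)] by simp
    ultimately show "1 \<le> (\<Sum>b\<in>BC C. f b)" by linarith
  qed
  finally have "real (card N) \<le> (\<Sum>b\<in>Bl. f b)" by simp
  also have "(\<Sum>b\<in>Bl. f b) = 3/10 * (\<Sum>b\<in>Bl. real (card (snd b))) - real (card Bl)"
    unfolding f_def by (simp add: sum_subtractf sum_distrib_left)
  finally show ?thesis unfolding N_def Bl_def by simp
qed

end



context G2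
begin

lemma edge_bound:
  "(\<Sum>C\<in>{C\<in>comps V H. two_ec C (comp_edges H C)}. card (comp_edges H C))
   + card (bridges V H) + (\<Sum>b\<in>blocks V H. card (snd b)) \<le> card H"
proof -
  define T2 where "T2 = {C\<in>comps V H. two_ec C (comp_edges H C)}"
  define X where "X = \<Union>(comp_edges H ` T2)"
  define Y where "Y = \<Union>(snd ` blocks V H)"
  define Br where "Br = bridges V H"
  have cX: "card X = (\<Sum>C\<in>T2. card (comp_edges H C))"
    unfolding X_def by (rule card_UN_CE) (auto simp: T2_def)
  have sndH: "snd b \<subseteq> H" if "b \<in> blocks V H" for b
  proof -
    obtain S F where SF: "b = (S,F)" by (cases b)
    then have "(S,F) \<in> blocks V H" using that by simp
    then obtain C where "F \<subseteq> comp_edges H C" using blk_unfold by blast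
    then show ?thesis using SF unfolding comp_edges_def by auto
  qed
  have cY: "card Y = (\<Sum>b\<in>blocks V H. card (snd b))"
    unfolding Y_def
  proof (rule card_UN_disjoint[OF finBl])
    show "\<forall>i\<in>blocks V H. finite (snd i)" using sndH finH finite_subset by blast
    show "\<forall>i\<in>blocks V H. \<forall>j\<in>blocks V H. i \<noteq> j \<longrightarrow> snd i \<inter> snd j = {}"
    proof (intro ballI impI)
      fix i j assume ij: "i \<in> blocks V H" "j \<in> blocks V H" "i \<noteq> j"
      obtain S F where i: "i = (S,F)" by (cases i)
      obtain S' F' where j: "j = (S',F')" by (cases j)
      show "snd i \<inter> snd j = {}" using blk_disj[of S F S' F'] ij i j by auto
    qed
  qed
  have XH: "X \<subseteq> H" unfolding X_def comp_edges_def by auto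
  have BrH: "Br \<subseteq> H" unfolding Br_def bridges_def by auto
  have YH: "Y \<subseteq> H" unfolding Y_def using sndH by auto
  have finX: "finite X" using XH finH finite_subset by blast
  have finBr: "finite Br" using BrH finH finite_subset by blast
  have finY: "finite Y" using YH finH finite_subset by blast
  have XBr: "X \<inter> Br = {}"
  proof (rule ccontr)
    assume "X \<inter> Br \<noteq> {}"
    then obtain g C where g: "C \<in> T2" "g \<in> comp_edges H C" "g \<in> bridges V H" unfolding X_def Br_def by auto
    then obtain C0 where C0: "C0 \<in> comps V H" "\<not> two_ec C0 (comp_edges H C0)" "g \<subseteq> C0"
      unfolding bridges_def by blast
    have "g \<in> H" "g \<subseteq> C" "C \<in> comps V H" using g unfolding comp_edges_def T2_def by auto
    then have "C = C0" using comp_edge_eq C0 by blast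
    then show False using g(1) C0(2) unfolding T2_def by auto
  qed
  have XY: "X \<inter> Y = {}"
  proof (rule ccontr)
    assume "X \<inter> Y \<noteq> {}"
    then obtain g C b where g: "C \<in> T2" "g \<in> comp_edges H C" "b \<in> blocks V H" "g \<in> snd b"
      unfolding X_def Y_def by auto
    obtain S F where SF: "b = (S,F)" by (cases b)
    then have "(S,F) \<in> blocks V H" using g(3) by simp
    then obtain C0 where C0: "C0 \<in> comps V H" "\<not> two_ec C0 (comp_edges H C0)" "F \<subseteq> comp_edges H C0"
      using blk_unfold by blast
    have "g \<in> comp_edges H C0" using C0 g SF by auto
    then have "g \<in> H" "g \<subseteq> C0" unfolding comp_edges_def by auto
    moreover have "g \<subseteq> C" "C \<in> comps V H" using g unfolding comp_edges_def T2_def by auto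
    ultimately have "C = C0" using comp_edge_eq C0 by blast
    then show False using g(1) C0(2) unfolding T2_def by auto
  qed
  have BrY: "Br \<inter> Y = {}"
  proof (rule ccontr)
    assume "Br \<inter> Y \<noteq> {}"
    then obtain g b where g: "g \<in> bridges V H" "b \<in> blocks V H" "g \<in> snd b"
      unfolding Br_def Y_def by auto
    obtain S F where SF: "b = (S,F)" by (cases b)
    then show False using blk_nonbridge[of S F g] g by auto
  qed
  have "card (X \<union> Br \<union> Y) = card X + card Br + card Y"
    using finX finBr finY XBr XY BrY by (simp add: card_Un_disjoint Int_Un_distrib2)
  moreover have "card (X \<union> Br \<union> Y) \<le> card H" using XH BrH YH finH by (simp add: card_mono)
  ultimately show ?thesis using cX cY unfolding T2_def Br_def by simp
qed

end



theorem lemma6: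
  fixes V :: "'a set" and E H :: "'a set set" and b t :: real
  assumes "simple_graph V E"
    and "canonical V E H"
    and "real (card (bridges V H)) = b * real (card H)"
    and "real (card (triangle_edges V H)) = t * real (card H)"
  shows "cost V H \<le> (13/10 + t/30 - b/20) * real (card H)"
proof -
  have cov: "two_edge_cover V E H" using assms(2) unfolding canonical_def by blast
  have sz: "\<forall>(S, F)\<in>blocks V H. (leaf_block V H S \<longrightarrow> 6 \<le> card F) \<and> (\<not> leaf_block V H S \<longrightarrow> 4 \<le> card F)"
    using assms(2) unfolding canonical_def by blast
  interpret G2 V H
  proof
    show "finite V" using assms(1) unfolding simple_graph_def by blast
    show "\<forall>g\<in>H. g \<subseteq> V \<and> card g = 2" using assms(1) cov unfolding simple_graph_def two_edge_cover_def by blast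
    show "\<forall>v\<in>V. 2 \<le> card {g\<in>H. v\<in>g}" using cov unfolding two_edge_cover_def by blast
  qed
  define T2 where "T2 = {C\<in>comps V H. two_ec C (comp_edges H C)}"
  define N where "N = {C\<in>comps V H. \<not> two_ec C (comp_edges H C)}"
  define T3 where "T3 = {C\<in>T2. is_cycle C (comp_edges H C) 3}"
  let ?k = "\<lambda>C. real (card (comp_edges H C))"
  have finT2: "finite T2" and finN: "finite N" unfolding T2_def N_def using finC by auto
  have "comps V H = T2 \<union> N" unfolding T2_def N_def by auto
  then have s1: "(\<Sum>C\<in>comps V H. comp_credit H C) = (\<Sum>C\<in>T2. comp_credit H C) + (\<Sum>C\<in>N. comp_credit H C)"
    using sum.union_disjoint[OF finT2 finN] unfolding T2_def N_def by auto
  have s2: "(\<Sum>C\<in>N. comp_credit H C) = real (card N)"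
    unfolding N_def comp_credit_def by simp
  have "(\<Sum>C\<in>T2. comp_credit H C) \<le> (\<Sum>C\<in>T2. 3/10 * ?k C + (if is_cycle C (comp_edges H C) 3 then ?k C / 30 else 0))"
    by (rule sum_mono) (use credit_bound in \<open>auto simp: T2_def\<close>)
  also have "\<dots> = 3/10 * (\<Sum>C\<in>T2. ?k C) + (\<Sum>C\<in>T2. (if is_cycle C (comp_edges H C) 3 then ?k C / 30 else 0))"
    by (simp add: sum.distrib sum_distrib_left)
  also have "(\<Sum>C\<in>T2. (if is_cycle C (comp_edges H C) 3 then ?k C / 30 else 0)) = (\<Sum>C\<in>T3. ?k C / 30)"
    unfolding T3_def by (rule sum.inter_filter[symmetric, OF finT2])
  also have "\<dots> = real (card (triangle_edges V H)) / 30"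
  proof -
    have "triangle_edges V H = \<Union>(comp_edges H ` T3)"
      unfolding triangle_edges_def T3_def T2_def by auto
    then have "card (triangle_edges V H) = (\<Sum>C\<in>T3. card (comp_edges H C))"
      using card_UN_CE[of T3] unfolding T3_def T2_def by auto
    then show ?thesis by (simp add: sum_divide_distrib)
  qed
  finally have s3: "(\<Sum>C\<in>T2. comp_credit H C) \<le> 3/10 * (\<Sum>C\<in>T2. ?k C) + real (card (triangle_edges V H)) / 30" .
  have bb: "real (card (blocks V H)) + real (card N) \<le> 3/10 * (\<Sum>b\<in>blocks V H. real (card (snd b)))"
    using blocks_bound[OF sz] unfolding N_def .
  have eb: "(\<Sum>C\<in>T2. ?k C) + real (card (bridges V H)) + (\<Sum>b\<in>blocks V H. real (card (snd b))) \<le> real (card H)"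
  proof -
    have "real ((\<Sum>C\<in>T2. card (comp_edges H C)) + card (bridges V H) + (\<Sum>b\<in>blocks V H. card (snd b))) \<le> real (card H)"
      using edge_bound unfolding T2_def by (simp only: of_nat_le_iff)
    then show ?thesis by (simp add: of_nat_sum)
  qed
  have "cost V H = real (card H) + (\<Sum>C\<in>T2. comp_credit H C) + real (card N)
      + 1/4 * real (card (bridges V H)) + real (card (blocks V H))"
    unfolding cost_def credits_def using s1 s2 by simp
  also have "\<dots> \<le> 13/10 * real (card H) + real (card (triangle_edges V H)) / 30 - real (card (bridges V H)) / 20"
    using s3 bb eb by linarith
  also have "\<dots> = (13/10 + t/30 - b/20) * real (card H)"
    using assms(3,4) by (simp add: algebra_simps)
  finally show ?thesis .
qed


end
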